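(* Let $m\geq3$ be an integer. Then $$\int_0^\infty\left(\sqrt{1+t^m}-t^{\frac m2}\right)dt=\frac{\sqrt\pi}{2\cos\left(\frac\pi m\right)}\,\frac{\Gamma\left(1+\frac1m\right)}{\Gamma\left(\frac32+\frac1m\right)}.$$ *)

theory Defs
  imports "HOL-Analysis.Analysis"
begin

end

theory Submission
  imports Defs "HOL-Real_Asymp.Real_Asymp"
begin


lemma pos_not_nonpos_int: "(x::real) > 0 \<Longrightarrow> x \<notin> \<int>\<^sub>\<le>\<^sub>0"
  by (auto simp: nonpos_Ints_def)

lemma Gamma_reflection_real:
  fixes z :: real
  shows "Gamma z * Gamma (1 - z) = pi / sin (pi * z)"
proof -
  have h1: "1 - complex_of_real z = complex_of_real (1 - z)" by simp
  have h2: "complex_of_real pi * complex_of_real z = complex_of_real (pi * z)" by simp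
  have "complex_of_real (Gamma z * Gamma (1 - z)) = Gamma (complex_of_real z) * Gamma (1 - complex_of_real z)"
    by (simp only: h1 of_real_mult Gamma_complex_of_real)
  also have "\<dots> = complex_of_real (pi / sin (pi * z))"
    by (subst Gamma_reflection_complex) (simp only: h2 sin_of_real of_real_divide)
  finally show ?thesis by (simp only: of_real_eq_iff)
qed

lemma Gamma_legendre_real:
  fixes z :: real
  assumes "z > 0"
  shows "Gamma z * Gamma (z + 1/2) = exp ((1 - 2*z) * ln 2) * sqrt pi * Gamma (2*z)"
proof -
  have z1: "complex_of_real z \<notin> \<int>\<^sub>\<le>\<^sub>0" using assms
    by (simp add: of_real_in_nonpos_Ints_iff pos_not_nonpos_int)
  have z2: "complex_of_real z + 1/2 \<notin> \<int>\<^sub>\<le>\<^sub>0" using assms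
  proof -
    have "complex_of_real z + 1/2 = complex_of_real (z + 1/2)" by simp
    then show ?thesis using assms by (simp only: of_real_in_nonpos_Ints_iff pos_not_nonpos_int) (simp add: pos_not_nonpos_int)
  qed
  have "complex_of_real (Gamma z * Gamma (z + 1/2)) = Gamma (complex_of_real z) * Gamma (complex_of_real z + 1/2)"
  proof -
    have h: "complex_of_real z + 1/2 = complex_of_real (z+1/2)" by simp
    show ?thesis by (simp only: h of_real_mult Gamma_complex_of_real)
  qed
  also have "\<dots> = exp ((1 - 2*complex_of_real z) * of_real (ln 2)) * of_real (sqrt pi) * Gamma (2*complex_of_real z)"
    by (rule Gamma_legendre_duplication[OF z1 z2])
  also have "\<dots> = complex_of_real (exp ((1 - 2*z) * ln 2) * sqrt pi * Gamma (2*z))"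
  proof -
    have e: "exp ((1 - 2*complex_of_real z) * of_real (ln 2)) = complex_of_real (exp ((1 - 2*z) * ln 2))"
      by (subst exp_of_real[symmetric]) simp
    have g: "Gamma (2*complex_of_real z) = complex_of_real (Gamma (2*z))"
      by (subst Gamma_complex_of_real[symmetric]) simp
    show ?thesis by (simp only: e g of_real_mult)
  qed
  finally show ?thesis by (simp only: of_real_eq_iff)
qed

lemma gamma_part:
  fixes s :: real
  assumes s0: "0 < s" and s1: "s < 1/2"
  shows "s * 2 powr (-2* s) * (2*Beta (2* s) (3/2 - s) + Beta (2* s+1) (1/2 - s))
       = sqrt pi / (2*cos(pi* s)) * (Gamma(1+s)/Gamma(3/2+s))"
proof -
  define E where "E = exp ((1 - 2* s) * ln 2)"
  have E: "2 powr (-2* s) = E / 2"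
    unfolding E_def powr_def by (simp add: algebra_simps exp_diff exp_minus field_simps)
  have E0: "E > 0" unfolding E_def by simp
  have B1: "Beta (2* s) (3/2 - s) = Gamma (2* s) * Gamma (3/2 - s) / Gamma (3/2 + s)"
    unfolding Beta_def by (simp add: algebra_simps)
  have B2: "Beta (2* s+1) (1/2 - s) = Gamma (2* s+1) * Gamma (1/2 - s) / Gamma (3/2 + s)"
    unfolding Beta_def by (simp add: algebra_simps)
  have G1: "Gamma (3/2 - s) = (1/2 - s) * Gamma (1/2 - s)"
    using Gamma_plus1[of "1/2 - s"] pos_not_nonpos_int[of "1/2 - s"] s1 by (simp add: algebra_simps)
  have G2: "Gamma (2* s+1) = (2* s) * Gamma (2* s)"
    using Gamma_plus1[of "2* s"] pos_not_nonpos_int[of "2* s"] s0 by simp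
  have G3: "Gamma (1+s) = s * Gamma s"
    using Gamma_plus1[of "s"] pos_not_nonpos_int[of "s"] s0 by (simp add: add.commute)
  have D: "Gamma s * Gamma (s + 1/2) = E * sqrt pi * Gamma (2* s)"
    unfolding E_def by (rule Gamma_legendre_real[OF s0])
  have c: "sin (pi * (1/2 + s)) = cos (pi * s)"
    by (simp add: distrib_left sin_add)
  have R: "Gamma (1/2 + s) * Gamma (1/2 - s) = pi / cos (pi * s)"
    using Gamma_reflection_real[of "1/2 + s"] c by simp
  have cpos: "cos (pi * s) > 0"
    using s0 s1 pi_gt_zero by (intro cos_gt_zero_pi) (auto simp: field_simps intro: less_trans[of _ 0])
  have P: "Gamma (3/2 + s) > 0" using s0 by simp
  have sp: "sqrt pi * sqrt pi = pi" by simp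
  have eq0: "s * 2 powr (-2* s) * (2*Beta (2* s) (3/2 - s) + Beta (2* s+1) (1/2 - s))
      = s * (E/2) * Gamma (2* s) * Gamma (1/2 - s) / Gamma (3/2 + s)"
    unfolding E B1 B2 G1 G2 using P by (simp add: field_simps)
  have H: "E * Gamma (2 * s) = Gamma s * Gamma (1/2 + s) / sqrt pi"
    using D by (simp add: field_simps add.commute)
  have "s * (E/2) * Gamma (2 * s) * Gamma (1/2 - s) / Gamma (3/2 + s)
      = s / 2 * (E * Gamma (2 * s)) * Gamma (1/2 - s) / Gamma (3/2 + s)" by simp
  also have "\<dots> = s * Gamma s * (Gamma (1/2 + s) * Gamma (1/2 - s)) / (2 * sqrt pi * Gamma (3/2 + s))"
    unfolding H by (simp add: field_simps)
  also have "\<dots> = sqrt pi / (2*cos(pi* s)) * (Gamma(1+s)/Gamma(3/2+s))"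
    unfolding R G3 using cpos P sp by (simp add: field_simps)
  finally show ?thesis using eq0 by simp
qed



lemma pt_f:
  fixes x :: real and m :: nat
  assumes x0: "0 < x" and x1: "x < 1" and m0: "m > 0"
  defines "Y \<equiv> x / (2 * sqrt (1 - x))"
  shows "sqrt (1 + (Y powr (2 / real m)) ^ m) - (Y powr (2 / real m)) powr (real m / 2) = sqrt (1 - x)"
proof -
  have sq0: "sqrt (1 - x) > 0" using x1 by simp
  have sq2: "sqrt (1 - x) ^ 2 = 1 - x" using x1 by simp
  have Y0: "Y > 0" unfolding Y_def using x0 sq0 by simp
  have e1: "(Y powr (2 / real m)) ^ m = Y ^ 2"
  proof -
    have "(Y powr (2 / real m)) ^ m = Y powr (real m * (2 / real m))"
      using Y0 by (simp add: powr_power)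
    also have "\<dots> = Y powr 2" using m0 by simp
    also have "\<dots> = Y ^ 2" using Y0 by simp
    finally show ?thesis .
  qed
  have e2: "(Y powr (2 / real m)) powr (real m / 2) = Y"
    using m0 Y0 by (simp add: powr_powr)
  have q1: "((2 - x) / (2 * sqrt (1 - x)))\<^sup>2 = (2 - x)^2 / (4 * (1 - x))"
    by (simp add: power_divide power_mult_distrib sq2)
  have q2: "Y\<^sup>2 = x^2 / (4 * (1 - x))"
    unfolding Y_def by (simp add: power_divide power_mult_distrib sq2)
  have q3: "(2 - x)^2 / (4 * (1 - x)) = 1 + x^2 / (4 * (1 - x))"
    using x1 by (simp add: field_simps power2_eq_square)
  have e3: "sqrt (1 + Y ^ 2) = (2 - x) / (2 * sqrt (1 - x))"
  proof (rule real_sqrt_unique)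
    show "((2 - x) / (2 * sqrt (1 - x)))\<^sup>2 = 1 + Y\<^sup>2"
      unfolding q1 q2 q3 ..
    show "0 \<le> (2 - x) / (2 * sqrt (1 - x))" using x1 sq0 by simp
  qed
  have q4: "(2 - x) / (2 * sqrt (1 - x)) - Y = (1 - x) / sqrt (1 - x)"
    unfolding Y_def using sq0 by (simp add: field_simps diff_divide_distrib[symmetric])
  have q5: "(1 - x) / sqrt (1 - x) = sqrt (1 - x)"
    using sq0 sq2 by (simp add: field_simps power2_eq_square)
  then show ?thesis using e1 e2 e3 q4 q5 by simp
qed

lemma pt_eq:
  fixes x s :: real
  assumes x0: "0 < x" and x1: "x < 1"
  defines "Y \<equiv> x / (2 * sqrt (1 - x))"
  shows "sqrt (1 - x) * (2 * s * Y powr (2 * s - 1) * ((2 - x) / (4 * (1 - x) * sqrt (1 - x))))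
    = s * 2 powr (-2 * s) * (2 * (x powr (2 * s - 1) * (1 - x) powr ((3/2 - s) - 1))
         + x powr ((2 * s + 1) - 1) * (1 - x) powr ((1/2 - s) - 1))"
proof -
  define a where "a = (1 - x) powr (1/2 - s)"
  define p where "p = x powr (2 * s - 1)"
  define S where "S = sqrt (1 - x)"
  define T where "T = 2 powr (2 * s)"
  have S0: "S > 0" unfolding S_def using x1 by simp
  have a0: "a > 0" unfolding a_def using x1 by simp
  have T0: "T > 0" unfolding T_def by simp
  have p0: "p > 0" unfolding p_def using x0 by simp
  have f1: "Y powr (2 * s - 1) = p / (2 powr (2 * s - 1) * S powr (2 * s - 1))"
    unfolding Y_def p_def S_def by (simp add: powr_divide powr_mult)
  have f2: "2 powr (2 * s - 1) = T / 2"
    unfolding T_def by (simp add: powr_diff)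
  have f3: "S powr (2 * s - 1) = 1 / a"
  proof -
    have h1: "S = (1 - x) powr (1/2)"
      unfolding S_def using x1 by (simp add: powr_half_sqrt)
    have h2: "(1/2) * (2 * s - 1) = - (1/2 - s)" by (simp add: algebra_simps)
    have h3: "S powr (2 * s - 1) = (1 - x) powr (- (1/2 - s))"
      unfolding h1 powr_powr h2 ..
    show ?thesis unfolding h3 a_def by (simp only: powr_minus inverse_eq_divide)
  qed
  have f4: "x powr ((2 * s + 1) - 1) = p * x"
  proof -
    have "(2 * s + 1) - 1 = (2 * s - 1) + 1" by simp
    then show ?thesis unfolding p_def using x0 by (simp only: powr_add) simp
  qed
  have f5: "(1 - x) powr ((3/2 - s) - 1) = a"
    unfolding a_def by (simp add: algebra_simps)
  have f6: "(1 - x) powr ((1/2 - s) - 1) = a / (1 - x)"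
    unfolding a_def using x1 by (subst powr_diff) simp
  have f7: "2 powr (-2 * s) = 1 / T"
    unfolding T_def by (simp add: powr_minus divide_inverse)
  have L: "S * (2 * s * (p / (T / 2 * (1 / a))) * ((2 - x) / (4 * (1 - x) * S))) = s * p * a * (2 - x) / (T * (1 - x))"
    using S0 a0 T0 x1 by (simp add: field_simps)
  have R: "s * (1 / T) * (2 * (p * a) + p * x * (a / (1 - x))) = s * p * a * (2 - x) / (T * (1 - x))"
    using T0 x1 by (simp add: field_simps)
  show ?thesis
    unfolding f1 f2 f3 f4 f5 f6 f7 S_def[symmetric] p_def[symmetric] L R ..
qed



lemma limA:
  fixes s :: real assumes "s > 0"
  shows "((\<lambda>x. (x / (2 * sqrt (1 - x))) powr (2 * s)) \<longlongrightarrow> 0) (at_right 0)"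
  using assms by real_asymp

lemma limB:
  fixes s :: real assumes "s > 0"
  shows "filterlim (\<lambda>x. (x / (2 * sqrt (1 - x))) powr (2 * s)) at_top (at_left 1)"
  using assms by real_asymp


lemma deriv_y:
  fixes x :: real assumes x0: "0 < x" and x1: "x < 1"
  shows "((\<lambda>x. x / (2 * sqrt (1 - x))) has_real_derivative ((2 - x) / (4 * (1 - x) * sqrt (1 - x)))) (at x)"
proof -
  have S0: "sqrt (1 - x) > 0" using x1 by simp
  have SS: "sqrt (1 - x) * sqrt (1 - x) = 1 - x" using x1 by simp
  have ds: "((\<lambda>x. sqrt (1 - x)) has_real_derivative (inverse (sqrt (1 - x)) / 2 * (-1))) (at x)"
    by (rule DERIV_chain2[OF DERIV_real_sqrt]) (use x1 in \<open>auto intro!: derivative_eq_intros\<close>)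
  have d2: "((\<lambda>x. 2 * sqrt (1 - x)) has_real_derivative (2 * (inverse (sqrt (1 - x)) / 2 * (-1)))) (at x)"
    by (rule DERIV_cmult[OF ds])
  have D: "((\<lambda>x. x / (2 * sqrt (1 - x))) has_real_derivative
     ((1 * (2 * sqrt (1 - x)) - x * (2 * (inverse (sqrt (1 - x)) / 2 * (-1)))) / (2 * sqrt (1 - x) * (2 * sqrt (1 - x))))) (at x)"
    by (rule DERIV_divide[OF DERIV_ident d2]) (use S0 in simp)
  have E: "(1 * (2 * sqrt (1 - x)) - x * (2 * (inverse (sqrt (1 - x)) / 2 * (-1)))) / (2 * sqrt (1 - x) * (2 * sqrt (1 - x)))
     = (2 - x) / (4 * (1 - x) * sqrt (1 - x))"
    using S0 SS x1 by (simp add: field_simps)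
  show ?thesis using D unfolding E .
qed

theorem theoremA1:
  fixes m :: nat
  assumes "m \<ge> 3"
  shows "((\<lambda>t::real. sqrt (1 + t ^ m) - t powr (real m / 2)) has_integral
           (sqrt pi / (2 * cos (pi / real m)) *
            (Gamma (1 + 1 / real m) / Gamma (3 / 2 + 1 / real m)))) {0..}"
proof -
  define s where "s = 1 / real m"
  have m0: "m > 0" and mr: "real m \<ge> 3" using assms by auto
  have s0: "s > 0" using m0 unfolding s_def by simp
  have s1: "s < 1/2" using mr unfolding s_def by (simp add: field_simps)
  have two_m: "2 / real m = 2 * s" unfolding s_def by simp
  define Y where "Y = (\<lambda>x::real. x / (2 * sqrt (1 - x)))"
  define f where "f = (\<lambda>t::real. sqrt (1 + t ^ m) - t powr (real m / 2))"
  define g where "g = (\<lambda>x. Y x powr (2 * s))"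
  define g' where "g' = (\<lambda>x. 2 * s * Y x powr (2 * s - 1) * ((2 - x) / (4 * (1 - x) * sqrt (1 - x))))"
  define h where "h = (\<lambda>x::real. s * 2 powr (-2 * s) * (2 * (x powr (2 * s - 1) * (1 - x) powr ((3/2 - s) - 1))
         + x powr ((2 * s + 1) - 1) * (1 - x) powr ((1/2 - s) - 1)))"
  define V where "V = s * 2 powr (-2 * s) * (2 * Beta (2 * s) (3/2 - s) + Beta (2 * s + 1) (1/2 - s))"
  have b1: "((\<lambda>t. t powr (2 * s - 1) * (1 - t) powr ((3/2 - s) - 1)) has_integral Beta (2 * s) (3/2 - s)) {0..1}"
    by (rule has_integral_Beta_real) (use s0 s1 in auto)
  have b2: "((\<lambda>t. t powr ((2 * s + 1) - 1) * (1 - t) powr ((1/2 - s) - 1)) has_integral Beta (2 * s + 1) (1/2 - s)) {0..1}"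
    by (rule has_integral_Beta_real) (use s0 s1 in auto)
  have hint: "(h has_integral V) {0..1}"
    unfolding h_def V_def by (intro has_integral_mult_right has_integral_add b1 b2)
  have hnn: "0 \<le> h x" for x
    unfolding h_def using s0 by (intro mult_nonneg_nonneg add_nonneg_nonneg) auto
  have ei: "einterval 0 1 = {0<..<1::real}"
    by (auto simp: einterval_def)
  have hint': "(h has_integral V) {0<..<1}" using hint has_integral_Icc_iff_Ioo by blast
  have hset: "set_integrable lborel (einterval 0 1) h"
  proof -
    have "h integrable_on {0<..<1}" using hint' by blast
    then have "h absolutely_integrable_on {0<..<1}"
      by (rule nonnegative_absolutely_integrable_1) (simp add: hnn)
    then have "integrable lebesgue (\<lambda>x. indicator {0<..<1::real} x *\<^sub>R h x)"
      unfolding set_integrable_def .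
    moreover have "(\<lambda>x. indicator {0<..<1::real} x *\<^sub>R h x) \<in> borel_measurable lborel"
      unfolding h_def by measurable
    ultimately have "integrable lborel (\<lambda>x. indicator {0<..<1::real} x *\<^sub>R h x)"
      using integrable_completion by blast
    then show ?thesis unfolding ei set_integrable_def .
  qed
  have Yx: "Y x > 0" if "0 < x" "x < 1" for x
    unfolding Y_def using that by simp
  have fg: "f (g x) = sqrt (1 - x)" if "0 < x" "x < 1" for x
    using pt_f[OF that m0] unfolding f_def g_def Y_def two_m .
  have eq: "f (g x) * g' x = h x" if "x \<in> einterval 0 1" for x
  proof -
    have x: "0 < x" "x < 1" using that ei by auto
    show ?thesis unfolding fg[OF x] g'_def h_def Y_def using pt_eq[OF x, of s] .
  qed
  have fgset: "set_integrable lborel (einterval 0 1) (\<lambda>x. f (g x) * g' x)"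
  proof -
    have "set_integrable lborel (einterval 0 1) (\<lambda>x. f (g x) * g' x) = set_integrable lborel (einterval 0 1) h"
      by (rule set_integrable_cong) (auto simp: eq)
    then show ?thesis using hset by simp
  qed
  have LBh: "(LBINT x=0..1. f (g x) * g' x) = V"
  proof -
    have "(LBINT x=0..1. f (g x) * g' x) = integral (einterval 0 1) (\<lambda>x. f (g x) * g' x)"
      by (rule interval_integral_eq_integral'[OF _ fgset]) simp
    also have "\<dots> = integral {0<..<1} h"
      unfolding ei by (rule integral_cong) (use eq ei in auto)
    also have "\<dots> = V" using hint' by blast
    finally show ?thesis .
  qed
  have ex: "0 < ereal x \<and> ereal x < 1 \<longleftrightarrow> 0 < x \<and> x < 1" for x :: real
    by (auto simp: one_ereal_def zero_ereal_def)
  have ex': "0 \<le> ereal x \<and> ereal x \<le> 1 \<longleftrightarrow> 0 \<le> x \<and> x \<le> 1" for x :: real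
    by (auto simp: one_ereal_def zero_ereal_def)
  have subst: "set_integrable lborel (einterval 0 \<infinity>) f \<and> (LBINT x=0..\<infinity>. f x) = (LBINT x=0..1. (f (g x) * g' x))"
  proof -
    have H1: "(0::ereal) < 1" by simp
    have H2: "DERIV g x :> g' x" if "0 < ereal x" "ereal x < 1" for x
    proof -
      have x: "0 < x" "x < 1" using that ex by auto
      have dY: "(Y has_real_derivative ((2 - x) / (4 * (1 - x) * sqrt (1 - x)))) (at x)"
        unfolding Y_def by (rule deriv_y[OF x])
      have dP: "((\<lambda>z. z powr (2 * s)) has_real_derivative 2 * s * Y x powr (2 * s - 1)) (at (Y x))"
        by (rule has_real_derivative_powr[OF Yx[OF x]])
      have "((\<lambda>x. (\<lambda>z. z powr (2 * s)) (Y x)) has_real_derivative (2 * s * Y x powr (2 * s - 1)) * ((2 - x) / (4 * (1 - x) * sqrt (1 - x)))) (at x)"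
        by (rule DERIV_chain2[OF dP dY])
      then show ?thesis unfolding g_def g'_def by simp
    qed
    have H3: "isCont f (g x)" if "0 < ereal x" "ereal x < 1" for x
    proof -
      have x: "0 < x" "x < 1" using that ex by auto
      have "g x > 0" unfolding g_def using Yx[OF x] by simp
      then show ?thesis unfolding f_def by (auto intro!: continuous_intros)
    qed
    have H4: "isCont g' x" if "0 < ereal x" "ereal x < 1" for x
    proof -
      have x: "0 < x" "x < 1" using that ex by auto
      have "isCont Y x" unfolding Y_def using x by (auto intro!: continuous_intros)
      then show ?thesis unfolding g'_def using Yx[OF x] x by (auto intro!: continuous_intros)
    qed
    have H5: "0 \<le> f (g x)" if "0 < ereal x" "ereal x < 1" for x
    proof -
      have x: "0 < x" "x < 1" using that ex by auto
      show ?thesis using fg[OF x] x by simp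
    qed
    have H6: "0 \<le> g' x" if "0 \<le> ereal x" "ereal x \<le> 1" for x
    proof -
      have x: "0 \<le> x" "x \<le> 1" using that ex' by auto
      show ?thesis unfolding g'_def Y_def using x s0
        by (intro mult_nonneg_nonneg divide_nonneg_nonneg) auto
    qed
    have H7: "((ereal \<circ> g \<circ> real_of_ereal) \<longlongrightarrow> 0) (at_right 0)"
      unfolding zero_ereal_def ereal_tendsto_simps g_def Y_def using limA[OF s0] by simp
    have H8: "((ereal \<circ> g \<circ> real_of_ereal) \<longlongrightarrow> \<infinity>) (at_left 1)"
      unfolding one_ereal_def ereal_tendsto_simps g_def Y_def using limB[OF s0] by simp
    have H9: "set_integrable lborel (einterval 0 1) (\<lambda>x. f (g x) * g' x)" by (rule fgset)
    show ?thesis using interval_integral_substitution_nonneg[OF H1 H2 H3 H4 H5 H6 H7 H8 H9] by blast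
  qed
  have ei2: "einterval 0 \<infinity> = {(0::real)<..}"
    by (auto simp: einterval_def zero_ereal_def)
  have fset: "set_integrable lborel {0<..} f" using subst ei2 by simp
  have "(LBINT x=0..\<infinity>. f x) = integral (einterval 0 \<infinity>) f"
    by (rule interval_integral_eq_integral') (use subst in auto)
  then have "integral {0<..} f = V" using subst LBh ei2 by simp
  moreover have "f integrable_on {0<..}" using set_borel_integral_eq_integral(1)[OF fset] .
  ultimately have "(f has_integral V) {0<..}" by (metis has_integral_integral)
  moreover have n1: "negligible {x \<in> {0..} - {0<..}. f x \<noteq> 0}"
    by (rule negligible_subset[of "{0}"]) auto
  moreover have n2: "negligible {x \<in> {0<..} - {0..}. f x \<noteq> 0}"
    by (rule negligible_subset[of "{}"]) auto
  ultimately have fint: "(f has_integral V) {0..}"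
    using has_integral_spike_set_eq[of "{0..}" "{0<..}" f V] by blast
  have ps: "pi * s = pi / real m" unfolding s_def by simp
  have VV: "V = sqrt pi / (2 * cos (pi / real m)) * (Gamma (1 + 1 / real m) / Gamma (3 / 2 + 1 / real m))"
    unfolding V_def gamma_part[OF s0 s1] ps unfolding s_def ..
  show ?thesis using fint unfolding f_def VV .
qed

end
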